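(* Let $\mathbf A$ and $\mathbf B$ be t-algebras of type $\tau$ with traces $\mathsf a$ and $\mathsf b$. The following are equivalent: (1) $\mathbf B\in\mathrm V_E(\mathbf A)$ and the natural homomorphism $t^{\mathbf A}\mapsto t^{\mathbf B}$ from $\mathbf A^\uparrow$ onto $\mathbf B^\uparrow$ is uniformly continuous; (2) for every $s\in\mathsf b$, the t-subalgebra $\mathbf B_{\bar s}$ of $\mathbf B$ generated by $s$ is a t-homomorphic image of a t-subalgebra of a finite t-power of $\mathbf A$.
   Context: $\mathbb N=\{1,2,\dots\}$. A thread on $A$ is $s\in A^{\mathbb N}$; $r[a_1,\dots,a_n]$ is the thread with entries $a_i$ for $i\le n$ and $r_i$ for $i>n$; $r\equiv_{\mathbb N}s$ iff $\{i:r_i\neq s_i\}$ is finite, $[s]_{\mathbb N}$ its class. A trace on $A$ is a nonempty union of $\equiv_{\mathbb N}$-classes. A t-algebra of type $\tau$ and trace $\mathsf a$ is $(A,\mathsf a,\sigma^{\mathbf A})_{\sigma\in\tau}$ with $\sigma^{\mathbf A}:\mathsf a\to A$ arbitrary. t-subalgebra: $(C,\mathsf c,\sigma^{\mathbf A}|_{\mathsf c})$ with $C\subseteq A$, $\mathsf c\subseteq\mathsf a$ a trace on $C$, $\sigma^{\mathbf A}(\mathsf c)\subseteq C$. t-homomorphism: $h:A\to B$ with $h^{\mathbb N}(\mathsf a)\subseteq\mathsf b$ ($h^{\mathbb N}$ coordinatewise) and $h\circ\sigma^{\mathbf A}=\sigma^{\mathbf B}\circ h^{\mathbb N}$ on $\mathsf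 a$; onto (t-homomorphic image) if $h$ and $h^{\mathbb N}:\mathsf a\to\mathsf b$ are surjective. Finite t-power $\mathbf A^n$: universe $A^n$, trace $\mathsf a^n$ (a tuple $(r^1,\dots,r^n)$ of threads identified with the thread of entries $(r^1_i,\dots,r^n_i)$), operations componentwise. $\tau$-terms: least set containing $\mathsf e_1,\mathsf e_2,\dots$ and $\sigma(t_1,\dots,t_n,\mathsf e_{n+1},\dots)$; term operations $\mathsf e_i^{\mathbf A}(s)=s_i$, $\sigma(t_1,\dots,t_n,\mathsf e_{n+1},\dots)^{\mathbf A}(s)=\sigma^{\mathbf A}(s[t_1^{\mathbf A}(s),\dots,t_n^{\mathbf A}(s)])$; $\theta_{\mathbf A}=\{(t,u):t^{\mathbf A}=u^{\mathbf A}\}$; $\mathrm V_E(\mathbf A)=\{\mathbf B:\theta_{\mathbf A}\subseteq\theta_{\mathbf B}\}$ (the Et-variety generated by $\mathbf A$). $\mathbf B_{\bar s}$ ($s\in\mathsf b$): universe $\{t^{\mathbf B}(s)\}$, trace $[s]_{\mathbb N}\cap(B_{\bar s})^{\mathbb N}$. The term clone algebra $\mathbf A^\uparrow$ is the set $\{t^{\mathbf A}\}$ of term operations with $\mathsf e_i=\mathsf e_i^{\mathbf A}$, $\sigma=\sigma^{\mathbf A}$ and $q_n(\varphi,\psi_1,\dots,\psi_n)(s)=\varphi(s[\psi_1(s),\dots,\psi_n(s)])$. The natural homomorphism $t^{\mathbf A}\mapsto t^{\mathbf B}$ is uniformly continuous if for every $s\in\mathsf b$ there exist $n$ and $r^1,\dots,r^n\in\mathsf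 a$ such that for all $\tau$-terms $t,u$: $t^{\mathbf A}(r^j)=u^{\mathbf A}(r^j)$ for all $j\le n$ implies $t^{\mathbf B}(s)=u^{\mathbf B}(s)$. *)

theory Defs
  imports Main
begin

text \<open>Threads are functions nat => 'a; paper index i (from 1) is index i-1 here.\<close>

definition threads :: "'a set \<Rightarrow> (nat \<Rightarrow> 'a) set" where
  "threads A = {s. \<forall>i. s i \<in> A}"

definition eqN :: "(nat \<Rightarrow> 'a) \<Rightarrow> (nat \<Rightarrow> 'a) \<Rightarrow> bool" where
  "eqN r s \<longleftrightarrow> finite {i. r i \<noteq> s i}"

definition is_trace :: "'a set \<Rightarrow> (nat \<Rightarrow> 'a) set \<Rightarrow> bool" where
  "is_trace A a \<longleftrightarrow> a \<noteq> {} \<and> a \<subseteq> threads A \<and>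
     (\<forall>r\<in>a. \<forall>s\<in>threads A. eqN r s \<longrightarrow> s \<in> a)"

definition talg :: "'a set \<Rightarrow> (nat \<Rightarrow> 'a) set \<Rightarrow> ('f \<Rightarrow> (nat \<Rightarrow> 'a) \<Rightarrow> 'a) \<Rightarrow> bool" where
  "talg A a F \<longleftrightarrow> is_trace A a \<and> (\<forall>\<sigma>. \<forall>s\<in>a. F \<sigma> s \<in> A)"

definition upd :: "(nat \<Rightarrow> 'a) \<Rightarrow> 'a list \<Rightarrow> nat \<Rightarrow> 'a" where
  "upd s xs = (\<lambda>i. if i < length xs then xs ! i else s i)"

text \<open>Terms: Var i is e_(i+1); App f [t1..tn] is f(t1,...,tn,e_(n+1),...).\<close>
datatype 'f trm = Var nat | App 'f "'f trm list"

fun eval :: "('f \<Rightarrow> (nat \<Rightarrow> 'a) \<Rightarrow> 'a) \<Rightarrow> 'f trm \<Rightarrow> (nat \<Rightarrow> 'a) \<Rightarrow> 'a" where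
  "eval F (Var i) s = s i"
| "eval F (App f ts) s = F f (upd s (map (\<lambda>t. eval F t s) ts))"

definition term_eq :: "(nat \<Rightarrow> 'a) set \<Rightarrow> ('f \<Rightarrow> (nat \<Rightarrow> 'a) \<Rightarrow> 'a) \<Rightarrow> 'f trm \<Rightarrow> 'f trm \<Rightarrow> bool" where
  "term_eq a F t u \<longleftrightarrow> (\<forall>s\<in>a. eval F t s = eval F u s)"

definition in_VE :: "(nat \<Rightarrow> 'a) set \<Rightarrow> ('f \<Rightarrow> (nat \<Rightarrow> 'a) \<Rightarrow> 'a) \<Rightarrow>
    (nat \<Rightarrow> 'b) set \<Rightarrow> ('f \<Rightarrow> (nat \<Rightarrow> 'b) \<Rightarrow> 'b) \<Rightarrow> bool" where
  "in_VE a F b G \<longleftrightarrow> (\<forall>t u. term_eq a F t u \<longrightarrow> term_eq b G t u)"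

definition unif_cont :: "(nat \<Rightarrow> 'a) set \<Rightarrow> ('f \<Rightarrow> (nat \<Rightarrow> 'a) \<Rightarrow> 'a) \<Rightarrow>
    (nat \<Rightarrow> 'b) set \<Rightarrow> ('f \<Rightarrow> (nat \<Rightarrow> 'b) \<Rightarrow> 'b) \<Rightarrow> bool" where
  "unif_cont a F b G \<longleftrightarrow> (\<forall>s\<in>b. \<exists>rs. set rs \<subseteq> a \<and>
     (\<forall>t u. (\<forall>r\<in>set rs. eval F t r = eval F u r) \<longrightarrow> eval G t s = eval G u s))"

definition tsub :: "'a set \<Rightarrow> (nat \<Rightarrow> 'a) set \<Rightarrow> ('f \<Rightarrow> (nat \<Rightarrow> 'a) \<Rightarrow> 'a) \<Rightarrow>
    'a set \<Rightarrow> (nat \<Rightarrow> 'a) set \<Rightarrow> bool" where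
  "tsub A a F C c \<longleftrightarrow> C \<subseteq> A \<and> c \<subseteq> a \<and> is_trace C c \<and> (\<forall>\<sigma>. \<forall>s\<in>c. F \<sigma> s \<in> C)"

definition thom_onto :: "'a set \<Rightarrow> (nat \<Rightarrow> 'a) set \<Rightarrow> ('f \<Rightarrow> (nat \<Rightarrow> 'a) \<Rightarrow> 'a) \<Rightarrow>
    'b set \<Rightarrow> (nat \<Rightarrow> 'b) set \<Rightarrow> ('f \<Rightarrow> (nat \<Rightarrow> 'b) \<Rightarrow> 'b) \<Rightarrow> ('a \<Rightarrow> 'b) \<Rightarrow> bool" where
  "thom_onto A a F B b G h \<longleftrightarrow>
     (\<forall>x\<in>A. h x \<in> B) \<and> (\<forall>s\<in>a. h \<circ> s \<in> b) \<and>
     (\<forall>\<sigma>. \<forall>s\<in>a. h (F \<sigma> s) = G \<sigma> (h \<circ> s)) \<and>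
     h ` A = B \<and> (\<lambda>s. h \<circ> s) ` a = b"

definition pow_univ :: "'a set \<Rightarrow> nat \<Rightarrow> 'a list set" where
  "pow_univ A n = {xs. length xs = n \<and> set xs \<subseteq> A}"

definition pow_trace :: "(nat \<Rightarrow> 'a) set \<Rightarrow> nat \<Rightarrow> (nat \<Rightarrow> 'a list) set" where
  "pow_trace a n = {(\<lambda>i. map (\<lambda>j. r j i) [0..<n]) | r. \<forall>j<n. r j \<in> a}"

definition pow_ops :: "('f \<Rightarrow> (nat \<Rightarrow> 'a) \<Rightarrow> 'a) \<Rightarrow> nat \<Rightarrow> 'f \<Rightarrow> (nat \<Rightarrow> 'a list) \<Rightarrow> 'a list" where
  "pow_ops F n \<sigma> w = map (\<lambda>j. F \<sigma> (\<lambda>i. w i ! j)) [0..<n]"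

definition gen_univ :: "('f \<Rightarrow> (nat \<Rightarrow> 'b) \<Rightarrow> 'b) \<Rightarrow> (nat \<Rightarrow> 'b) \<Rightarrow> 'b set" where
  "gen_univ G s = range (\<lambda>t. eval G t s)"

definition gen_trace :: "('f \<Rightarrow> (nat \<Rightarrow> 'b) \<Rightarrow> 'b) \<Rightarrow> (nat \<Rightarrow> 'b) \<Rightarrow> (nat \<Rightarrow> 'b) set" where
  "gen_trace G s = {r. eqN s r \<and> r \<in> threads (gen_univ G s)}"

end

theory Submission
  imports Defs
begin

lemma pow_eval:
  assumes "\<forall>i. length (W i) = n"
  shows "eval (pow_ops F n) t W = map (\<lambda>j. eval F t (\<lambda>i. W i ! j)) [0..<n]"
proof (induction t)
  case (Var x)
  have "length (W x) = n" using assms by blast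
  then have "map (\<lambda>j. W x ! j) [0..<n] = W x" using map_nth[of "W x"] by simp
  then show ?case by simp
next
  case (App f ts)
  have eq: "(\<lambda>i. upd W (map (\<lambda>t. eval (pow_ops F n) t W) ts) i ! j)
        = upd (\<lambda>i. W i ! j) (map (\<lambda>t. eval F t (\<lambda>i. W i ! j)) ts)" if j: "j < n" for j
  proof
    fix i
    show "upd W (map (\<lambda>t. eval (pow_ops F n) t W) ts) i ! j
        = upd (\<lambda>i. W i ! j) (map (\<lambda>t. eval F t (\<lambda>i. W i ! j)) ts) i"
    proof (cases "i < length ts")
      case True
      then have "ts ! i \<in> set ts" by simp
      then have "eval (pow_ops F n) (ts ! i) W = map (\<lambda>j. eval F (ts ! i) (\<lambda>i. W i ! j)) [0..<n]"
        by (rule App.IH)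
      then show ?thesis using True j unfolding upd_def by simp
    next
      case False
      then show ?thesis unfolding upd_def by simp
    qed
  qed
  have "eval (pow_ops F n) (App f ts) W
      = map (\<lambda>j. F f (\<lambda>i. upd W (map (\<lambda>t. eval (pow_ops F n) t W) ts) i ! j)) [0..<n]"
    by (simp add: pow_ops_def)
  also have "\<dots> = map (\<lambda>j. F f (upd (\<lambda>i. W i ! j) (map (\<lambda>t. eval F t (\<lambda>i. W i ! j)) ts))) [0..<n]"
    using eq by (intro map_cong) auto
  also have "\<dots> = map (\<lambda>j. eval F (App f ts) (\<lambda>i. W i ! j)) [0..<n]" by simp
  finally show ?case .
qed

lemma pow_eval2:
  "eval (pow_ops F n) t (\<lambda>i. map (\<lambda>j. r j i) [0..<n]) = map (\<lambda>j. eval F t (r j)) [0..<n]"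
proof -
  have "eval (pow_ops F n) t (\<lambda>i. map (\<lambda>j. r j i) [0..<n])
     = map (\<lambda>j. eval F t (\<lambda>i. map (\<lambda>j. r j i) [0..<n] ! j)) [0..<n]"
    by (rule pow_eval) simp
  also have "\<dots> = map (\<lambda>j. eval F t (r j)) [0..<n]" by simp
  finally show ?thesis .
qed

lemma eqN_upd: "eqN s (upd s xs)"
proof -
  have "{i. s i \<noteq> upd s xs i} \<subseteq> {..<length xs}" by (auto simp: upd_def)
  then show ?thesis unfolding eqN_def using finite_subset by blast
qed

lemma eqN_refl: "eqN s s" by (simp add: eqN_def)

lemma eqN_sym: "eqN r s \<Longrightarrow> eqN s r"
proof -
  assume "eqN r s"
  have "{i. s i \<noteq> r i} = {i. r i \<noteq> s i}" by auto
  then show ?thesis using \<open>eqN r s\<close> unfolding eqN_def by simp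
qed

lemma eqN_trans: "eqN r s \<Longrightarrow> eqN s u \<Longrightarrow> eqN r u"
proof -
  assume "eqN r s" "eqN s u"
  have "{i. r i \<noteq> u i} \<subseteq> {i. r i \<noteq> s i} \<union> {i. s i \<noteq> u i}" by auto
  then show ?thesis using \<open>eqN r s\<close> \<open>eqN s u\<close> unfolding eqN_def using finite_subset by blast
qed

lemma upd_threads: "s \<in> threads X \<Longrightarrow> set xs \<subseteq> X \<Longrightarrow> upd s xs \<in> threads X"
  by (auto simp: threads_def upd_def)

lemma comp_upd: "h \<circ> upd R xs = upd (h \<circ> R) (map h xs)"
  by (auto simp: upd_def)

lemma eval_closed:
  assumes "is_trace A a" "\<forall>\<sigma>. \<forall>s\<in>a. F \<sigma> s \<in> A" "s \<in> a"
  shows "eval F t s \<in> A"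
proof (induction t)
  case (Var x)
  then show ?case using assms unfolding is_trace_def threads_def by auto
next
  case (App f ts)
  have "upd s (map (\<lambda>t. eval F t s) ts) \<in> threads A"
    using App assms by (intro upd_threads) (auto simp: is_trace_def)
  then have "upd s (map (\<lambda>t. eval F t s) ts) \<in> a"
    using assms eqN_upd unfolding is_trace_def by blast
  then show ?case using assms by simp
qed

lemma eval_closed_sub:
  assumes "is_trace C c" "\<forall>\<sigma>. \<forall>s\<in>c. F \<sigma> s \<in> C" "s \<in> c"
  shows "eval F t s \<in> C" "upd s (map (\<lambda>t. eval F t s) ts) \<in> c"
proof -
  show *: "\<And>t. eval F t s \<in> C" by (rule eval_closed[OF assms])
  have "upd s (map (\<lambda>t. eval F t s) ts) \<in> threads C"
    using * assms by (intro upd_threads) (auto simp: is_trace_def)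
  then show "upd s (map (\<lambda>t. eval F t s) ts) \<in> c"
    using assms eqN_upd unfolding is_trace_def by blast
qed

lemma hom_eval:
  assumes "is_trace C c" "\<forall>\<sigma>. \<forall>s\<in>c. F \<sigma> s \<in> C"
    "\<forall>\<sigma>. \<forall>W\<in>c. h (F \<sigma> W) = G \<sigma> (h \<circ> W)" "W \<in> c"
  shows "eval G t (h \<circ> W) = h (eval F t W)"
proof (induction t)
  case (Var x)
  then show ?case by simp
next
  case (App f ts)
  have "eval G (App f ts) (h \<circ> W) = G f (upd (h \<circ> W) (map (\<lambda>t. h (eval F t W)) ts))"
  proof -
    have mq: "map (\<lambda>t. eval G t (h \<circ> W)) ts = map (\<lambda>t. h (eval F t W)) ts"
      using App.IH by (intro map_cong) (auto simp: comp_def)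
    show ?thesis by (simp only: eval.simps mq)
  qed
  also have "\<dots> = G f (h \<circ> upd W (map (\<lambda>t. eval F t W) ts))"
    unfolding comp_upd map_map by (simp only: o_def)
  also have "\<dots> = h (eval F (App f ts) W)"
    using assms eval_closed_sub(2)[OF assms(1,2,4)] by simp
  finally show ?case .
qed

lemma upd_repr:
  assumes "finite {i. R i \<noteq> W i}" "\<forall>i. W i \<in> range g"
  shows "\<exists>ts. W = upd R (map g ts)"
proof -
  obtain N where N: "\<forall>i\<in>{i. R i \<noteq> W i}. i < N"
    using assms(1) finite_nat_set_iff_bounded by blast
  define ts where "ts = map (\<lambda>i. SOME t. g t = W i) [0..<N]"
  have "map g ts = map W [0..<N]"
  proof -
    have ex: "\<exists>t. g t = W i" for i using assms(2) by (metis rangeE)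
    show ?thesis unfolding ts_def using ex by (auto intro: someI_ex)
  qed
  moreover have "W = upd R (map W [0..<N])"
  proof
    fix i show "W i = upd R (map W [0..<N]) i"
      using N by (cases "i < N") (auto simp: upd_def, metis)
  qed
  ultimately have "W = upd R (map g ts)" by simp
  then show ?thesis by (rule exI)
qed

theorem mainTheorem19:
  fixes A :: "'a set" and a :: "(nat \<Rightarrow> 'a) set" and F :: "'f \<Rightarrow> (nat \<Rightarrow> 'a) \<Rightarrow> 'a"
    and B :: "'b set" and b :: "(nat \<Rightarrow> 'b) set" and G :: "'f \<Rightarrow> (nat \<Rightarrow> 'b) \<Rightarrow> 'b"
  assumes "talg A a F" and "talg B b G"
  shows "(in_VE a F b G \<and> unif_cont a F b G) \<longleftrightarrow>
    (\<forall>s\<in>b. \<exists>n (C :: 'a list set) c (h :: 'a list \<Rightarrow> 'b).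
        tsub (pow_univ A n) (pow_trace a n) (pow_ops F n) C c \<and>
        thom_onto C c (pow_ops F n) (gen_univ G s) (gen_trace G s) G h)"
proof
  assume L: "in_VE a F b G \<and> unif_cont a F b G"
  have trA: "is_trace A a" and clA: "\<forall>\<sigma>. \<forall>s\<in>a. F \<sigma> s \<in> A"
    using assms(1) by (auto simp: talg_def)
  show "\<forall>s\<in>b. \<exists>n (C :: 'a list set) c (h :: 'a list \<Rightarrow> 'b).
        tsub (pow_univ A n) (pow_trace a n) (pow_ops F n) C c \<and>
        thom_onto C c (pow_ops F n) (gen_univ G s) (gen_trace G s) G h"
  proof
    fix s assume sb: "s \<in> b"
    obtain rs where rs: "set rs \<subseteq> a"
      and P: "\<And>t u. (\<forall>r\<in>set rs. eval F t r = eval F u r) \<Longrightarrow> eval G t s = eval G u s"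
      using L sb unfolding unif_cont_def by blast
    define n where "n = length rs"
    define Fn where "Fn = pow_ops F n"
    define R where "R = (\<lambda>i. map (\<lambda>j. (rs ! j) i) [0..<n])"
    define ev where "ev = (\<lambda>t. eval Fn t R)"
    define C where "C = range ev"
    define c where "c = {W. eqN R W \<and> W \<in> threads C}"
    define h where "h = (\<lambda>x. eval G (SOME t. ev t = x) s)"
    have evm: "ev t = map (\<lambda>j. eval F t (rs ! j)) [0..<n]" for t
      unfolding ev_def Fn_def R_def by (rule pow_eval2)
    have rsa: "j < n \<Longrightarrow> rs ! j \<in> a" for j using rs n_def by auto
    have hE: "h (ev t) = eval G t s" for t
    proof -
      define t' where "t' = (SOME t'. ev t' = ev t)"
      have "ev t' = ev t" unfolding t'_def by (rule someI) (rule refl)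
      then have "\<forall>r\<in>set rs. eval F t' r = eval F t r"
        unfolding evm n_def by (auto simp: in_set_conv_nth)
      then have "eval G t' s = eval G t s" by (rule P)
      then show ?thesis unfolding h_def t'_def .
    qed
    have hR: "h \<circ> R = s"
    proof
      fix i have "R i = ev (Var i)" unfolding ev_def by simp
      then show "(h \<circ> R) i = s i" using hE[of "Var i"] by simp
    qed
    have Rc: "R \<in> c"
      unfolding c_def C_def threads_def by (auto simp: eqN_refl ev_def intro: range_eqI[of _ _ "Var _"])
    have repr: "W \<in> c \<Longrightarrow> \<exists>ts. W = upd R (map ev ts)" for W
      using upd_repr[of R W ev] unfolding c_def C_def eqN_def threads_def by auto
    have updc: "upd R (map ev ts) \<in> c" for ts
    proof -
      have "R \<in> threads C" using Rc unfolding c_def by simp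
      then have "upd R (map ev ts) \<in> threads C"
        by (rule upd_threads) (auto simp: C_def)
      then show ?thesis unfolding c_def using eqN_upd by simp
    qed
    have Fnc: "Fn \<sigma> (upd R (map ev ts)) = ev (App \<sigma> ts)" for \<sigma> ts
      unfolding ev_def by simp
    have hupd: "h \<circ> upd R (map ev ts) = upd s (map (\<lambda>t. eval G t s) ts)" for ts
      unfolding comp_upd hR map_map by (simp add: comp_def hE)
    have CA: "C \<subseteq> pow_univ A n"
      unfolding C_def pow_univ_def using eval_closed[OF trA clA] rsa by (auto simp: evm)
    have lenW: "W \<in> c \<Longrightarrow> length (W i) = n" for W i
      using CA unfolding c_def threads_def pow_univ_def by auto
    have cpow: "c \<subseteq> pow_trace a n"
    proof
      fix W assume Wc: "W \<in> c"
      define r' where "r' = (\<lambda>j i. W i ! j)"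
      have "W = (\<lambda>i. map (\<lambda>j. r' j i) [0..<n])"
        unfolding r'_def using lenW[OF Wc] by (metis map_nth)
      moreover have "\<forall>j<n. r' j \<in> a"
      proof (intro allI impI)
        fix j assume j: "j < n"
        have "r' j \<in> threads A"
          unfolding threads_def r'_def
        proof (intro CollectI allI)
          fix i
          have "W i \<in> C" using Wc unfolding c_def threads_def by simp
          then have "W i \<in> pow_univ A n" using CA by blast
          then have "length (W i) = n" "set (W i) \<subseteq> A" unfolding pow_univ_def by auto
          then show "W i ! j \<in> A" using j nth_mem by blast
        qed
        moreover have "eqN (rs ! j) (r' j)"
        proof -
          have Rj: "R i ! j = (rs ! j) i" for i using j unfolding R_def by simp
          have "{i. (rs ! j) i \<noteq> r' j i} \<subseteq> {i. R i \<noteq> W i}"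
            unfolding r'_def using Rj by (auto, metis)
          then show ?thesis using Wc unfolding c_def eqN_def using finite_subset by blast
        qed
        ultimately show "r' j \<in> a" using trA rsa[OF j] unfolding is_trace_def by blast
      qed
      ultimately show "W \<in> pow_trace a n" unfolding pow_trace_def by blast
    qed
    have trC: "is_trace C c"
      unfolding is_trace_def
    proof (intro conjI ballI impI)
      show "c \<noteq> {}" using Rc by auto
      show "c \<subseteq> threads C" unfolding c_def by auto
      fix r s' assume "r \<in> c" "s' \<in> threads C" "eqN r s'"
      then show "s' \<in> c" unfolding c_def using eqN_trans by blast
    qed
    have clC: "\<forall>\<sigma>. \<forall>W\<in>c. Fn \<sigma> W \<in> C"
      using repr Fnc unfolding C_def by fastforce
    have tsub: "tsub (pow_univ A n) (pow_trace a n) Fn C c"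
      unfolding tsub_def using CA cpow trC clC by blast
    have th: "thom_onto C c Fn (gen_univ G s) (gen_trace G s) G h"
      unfolding thom_onto_def
    proof (intro conjI)
      show hC: "\<forall>x\<in>C. h x \<in> gen_univ G s" unfolding C_def gen_univ_def using hE by auto
      show hc: "\<forall>W\<in>c. h \<circ> W \<in> gen_trace G s"
      proof
        fix W assume Wc: "W \<in> c"
        then obtain ts where W: "W = upd R (map ev ts)" using repr by blast
        have "eqN s (h \<circ> W)" unfolding W hupd by (rule eqN_upd)
        moreover have "h \<circ> W \<in> threads (gen_univ G s)"
          using Wc hC unfolding c_def threads_def by auto
        ultimately show "h \<circ> W \<in> gen_trace G s" unfolding gen_trace_def by auto
      qed
      show "\<forall>\<sigma>. \<forall>W\<in>c. h (Fn \<sigma> W) = G \<sigma> (h \<circ> W)"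
      proof (intro allI ballI)
        fix \<sigma> W assume "W \<in> c"
        then obtain ts where W: "W = upd R (map ev ts)" using repr by blast
        show "h (Fn \<sigma> W) = G \<sigma> (h \<circ> W)"
          unfolding W Fnc hupd hE by simp
      qed
      show "h ` C = gen_univ G s" unfolding C_def gen_univ_def using hE by (auto simp: image_image)
      show "(\<lambda>W. h \<circ> W) ` c = gen_trace G s"
      proof
        show "(\<lambda>W. h \<circ> W) ` c \<subseteq> gen_trace G s" using hc by auto
        show "gen_trace G s \<subseteq> (\<lambda>W. h \<circ> W) ` c"
        proof
          fix r' assume "r' \<in> gen_trace G s"
          then have "finite {i. s i \<noteq> r' i}" "\<forall>i. r' i \<in> range (\<lambda>t. eval G t s)"
            unfolding gen_trace_def eqN_def threads_def gen_univ_def by auto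
          then obtain us where "r' = upd s (map (\<lambda>t. eval G t s) us)"
            using upd_repr by blast
          then have "r' = h \<circ> upd R (map ev us)" by (simp add: hupd)
          then show "r' \<in> (\<lambda>W. h \<circ> W) ` c" using updc by blast
        qed
      qed
    qed
    show "\<exists>n (C :: 'a list set) c (h :: 'a list \<Rightarrow> 'b).
        tsub (pow_univ A n) (pow_trace a n) (pow_ops F n) C c \<and>
        thom_onto C c (pow_ops F n) (gen_univ G s) (gen_trace G s) G h"
      using tsub th unfolding Fn_def by blast
  qed
next
  assume R: "\<forall>s\<in>b. \<exists>n (C :: 'a list set) c (h :: 'a list \<Rightarrow> 'b).
        tsub (pow_univ A n) (pow_trace a n) (pow_ops F n) C c \<and>
        thom_onto C c (pow_ops F n) (gen_univ G s) (gen_trace G s) G h"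
  have key: "(\<forall>t u. term_eq a F t u \<longrightarrow> eval G t s = eval G u s) \<and>
     (\<exists>rs. set rs \<subseteq> a \<and>
     (\<forall>t u. (\<forall>r\<in>set rs. eval F t r = eval F u r) \<longrightarrow> eval G t s = eval G u s))"
    if sb: "s \<in> b" for s
  proof -
    obtain n and C :: "'a list set" and c and h :: "'a list \<Rightarrow> 'b" where
      ts: "tsub (pow_univ A n) (pow_trace a n) (pow_ops F n) C c" and
      th: "thom_onto C c (pow_ops F n) (gen_univ G s) (gen_trace G s) G h"
      using R sb by blast
    have "s \<in> gen_trace G s"
      unfolding gen_trace_def threads_def gen_univ_def
      by (auto simp: eqN_refl intro: range_eqI[of _ _ "Var _"])
    then have "s \<in> (\<lambda>W. h \<circ> W) ` c" using th unfolding thom_onto_def by simp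
    then obtain W where Wc: "W \<in> c" and sW: "s = h \<circ> W" by (rule imageE) simp
    have "W \<in> pow_trace a n" using Wc ts unfolding tsub_def by auto
    then obtain r where W: "W = (\<lambda>i. map (\<lambda>j. r j i) [0..<n])" and ra: "\<forall>j<n. r j \<in> a"
      unfolding pow_trace_def by blast
    have ev: "eval G t s = h (map (\<lambda>j. eval F t (r j)) [0..<n])" for t
    proof -
      have "eval G t s = h (eval (pow_ops F n) t W)"
        unfolding sW using ts th Wc unfolding tsub_def thom_onto_def
        by (intro hom_eval) auto
      then show ?thesis unfolding W pow_eval2 .
    qed
    show ?thesis
    proof (intro conjI allI impI exI)
      fix t u assume "term_eq a F t u"
      then show "eval G t s = eval G u s" unfolding ev term_eq_def using ra by (intro arg_cong[where f=h] map_cong) auto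
    next
      show "set (map r [0..<n]) \<subseteq> a" using ra by auto
    next
      fix t u assume "\<forall>r'\<in>set (map r [0..<n]). eval F t r' = eval F u r'"
      then show "eval G t s = eval G u s" unfolding ev by (intro arg_cong[where f=h] map_cong) auto
    qed
  qed
  show "in_VE a F b G \<and> unif_cont a F b G"
  proof
    show "in_VE a F b G" unfolding in_VE_def
    proof (intro allI impI)
      fix t u assume tu: "term_eq a F t u"
      show "term_eq b G t u" unfolding term_eq_def
      proof
        fix s assume "s \<in> b"
        then show "eval G t s = eval G u s" using key[of s] tu by blast
      qed
    qed
    show "unif_cont a F b G" unfolding unif_cont_def
    proof
      fix s assume "s \<in> b"
      then show "\<exists>rs. set rs \<subseteq> a \<and>
     (\<forall>t u. (\<forall>r\<in>set rs. eval F t r = eval F u r) \<longrightarrow> eval G t s = eval G u s)"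
        using key[of s] by blast
    qed
  qed
qed

end
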